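(* Let $\varepsilon\in\{1,-1\}$ and $n\ge2$. Then $$\sum_{\gamma\in\Delta^<_n}\varepsilon^{\ell_B(\gamma)}q^{\mathrm{fmaj}(\gamma)}=\varepsilon^nq\,[2]_{\varepsilon q}[4]_{q}[6]_{\varepsilon q}\cdots[2n-2]_{\varepsilon^{n-1}q}\,[n-1]_{\varepsilon^nq}=\varepsilon^nq\left(\frac{1-q}{1-\varepsilon q}\right)^{\lceil n/2\rceil}[2]_q[4]_q\cdots[2n-2]_q[n-1]_q,$$ where the $i$-th factor of the first product is $[2i]_{\varepsilon^iq}$.
   Context: $B_n$ is the set of words $\gamma=\gamma_1\cdots\gamma_n$ with $\gamma_i\in\{\pm1,\dots,\pm n\}$ and $|\gamma_1|\cdots|\gamma_n|$ a permutation of $[n]$; $\Delta^<_n=\{\gamma\in B_n:0<\gamma_n<n\}$. $\mathrm{inv}$ in usual order, $\ell_B(\gamma)=\mathrm{inv}(\gamma)-\sum_{i:\gamma_i<0}\gamma_i$. Order $\prec$: $-1\prec-2\prec\cdots\prec-N\prec1\prec\cdots\prec N$; $\mathrm{maj}_\prec(w)=\sum_{i:w_i\succ w_{i+1}}i$; $\mathrm{fmaj}(w)=2\mathrm{maj}_\prec(w)+\mathrm{neg}(w)$ with $\mathrm{neg}(w)$ the number of negative letters. For an indeterminate $x$, $[m]_x=(1-x^m)/(1-x)=1+x+\dots+x^{m-1}$. *)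

theory Defs
  imports Complex_Main
begin

text \<open>Signed permutations as words (lists) \<gamma>_1 ... \<gamma>_n of nonzero integers whose
  absolute values form a permutation of [n]; list index i corresponds to position i+1.\<close>
definition signed_perms :: "nat \<Rightarrow> int list set" where
  "signed_perms n = {w. length w = n \<and> distinct (map abs w) \<and> set (map abs w) = {1..int n}}"

definition Delta_lt :: "nat \<Rightarrow> int list set" where
  "Delta_lt n = {w \<in> signed_perms n. 0 < last w \<and> last w < int n}"

definition inv :: "int list \<Rightarrow> nat" where
  "inv w = card {(i, j). i < j \<and> j < length w \<and> w ! i > w ! j}"

definition neg :: "int list \<Rightarrow> nat" where
  "neg w = length (filter (\<lambda>a. a < 0) w)"

definition lengthB :: "int list \<Rightarrow> nat" where
  "lengthB w = nat (int (inv w) - sum_list (filter (\<lambda>a. a < 0) w))"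

text \<open>the order -1 < -2 < ... < -N < 1 < ... < N\<close>
definition prec :: "int \<Rightarrow> int \<Rightarrow> bool" where
  "prec a b \<longleftrightarrow> (a < 0 \<and> b > 0) \<or> (a < 0 \<and> b < 0 \<and> \<bar>a\<bar> < \<bar>b\<bar>) \<or> (a > 0 \<and> b > 0 \<and> a < b)"

definition maj_prec :: "int list \<Rightarrow> nat" where
  "maj_prec w = (\<Sum>i \<in> {i. Suc i < length w \<and> prec (w ! Suc i) (w ! i)}. Suc i)"

definition fmaj :: "int list \<Rightarrow> nat" where
  "fmaj w = 2 * maj_prec w + neg w"

definition qint :: "nat \<Rightarrow> 'a::comm_ring_1 \<Rightarrow> 'a" where
  "qint m x = (\<Sum>k<m. x ^ k)"

end

theory Submission imports Defs begin

lemma inv_snoc: "inv (w @ [c]) = inv w + length (filter (\<lambda>a. c < a) w)"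
proof -
  have "{(i, j). i < j \<and> j < length (w@[c]) \<and> (w@[c]) ! i > (w@[c]) ! j}
      = {(i, j). i < j \<and> j < length w \<and> w ! i > w ! j} \<union> (\<lambda>i. (i, length w)) ` {i. i < length w \<and> c < w ! i}"
    by (auto simp: nth_append less_Suc_eq split: if_splits)
  moreover have "{(i, j). i < j \<and> j < length w \<and> w ! i > w ! j} \<inter> (\<lambda>i. (i, length w)) ` {i. i < length w \<and> c < w ! i} = {}"
    by auto
  moreover have "finite {(i, j). i < j \<and> j < length w \<and> w ! i > w ! j}"
    by (rule finite_subset[of _ "{..<length w} \<times> {..<length w}"]) auto
  moreover have "card ((\<lambda>i. (i, length w)) ` {i. i < length w \<and> c < w ! i}) = card {i. i < length w \<and> c < w ! i}"
    by (rule card_image) (auto simp: inj_on_def)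
  ultimately show ?thesis unfolding inv_def
    by (simp add: card_Un_disjoint length_filter_conv_card)
qed

lemma maj_snoc: "maj_prec (w @ [c]) = maj_prec w + (if w \<noteq> [] \<and> prec c (last w) then length w else 0)"
proof (cases "w = []")
  case True then show ?thesis by (simp add: maj_prec_def)
next
  case False
  let ?S = "{i. Suc i < length w \<and> prec (w ! Suc i) (w ! i)}"
  have eq: "{i. Suc i < length (w@[c]) \<and> prec ((w@[c]) ! Suc i) ((w@[c]) ! i)}
       = ?S \<union> (if prec c (last w) then {length w - 1} else {})"
  proof (rule set_eqI)
    fix i
    show "i \<in> {i. Suc i < length (w@[c]) \<and> prec ((w@[c]) ! Suc i) ((w@[c]) ! i)} \<longleftrightarrow>
          i \<in> ?S \<union> (if prec c (last w) then {length w - 1} else {})"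
    proof (cases "Suc i < length w")
      case True then show ?thesis by (auto simp: nth_append)
    next
      case F: False
      show ?thesis
      proof (cases "i = length w - 1")
        case True
        then show ?thesis using False F by (auto simp: nth_append last_conv_nth)
      next
        case False
        then show ?thesis using F by auto
      qed
    qed
  qed
  have fin: "finite ?S" by (rule finite_subset[of _ "{..<length w}"]) auto
  have "length w - 1 \<notin> ?S" by auto
  then show ?thesis using False unfolding maj_prec_def eq
    by (simp add: fin)
qed

lemma neg_snoc: "neg (w @ [c]) = neg w + (if c < 0 then 1 else 0)"
  by (simp add: neg_def)

lemma fmaj_snoc: "fmaj (w @ [c]) = fmaj w + (if w \<noteq> [] \<and> prec c (last w) then 2 * length w else 0) + (if c < 0 then 1 else 0)"
  by (simp add: fmaj_def maj_snoc neg_snoc)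


definition SA :: "int set \<Rightarrow> int set" where "SA A = A \<union> uminus ` A"
definition W :: "int set \<Rightarrow> int list set" where
  "W A = {w. distinct (map abs w) \<and> set (map abs w) = A}"

lemma W_length: "w \<in> W A \<Longrightarrow> length w = card A"
proof -
  assume "w \<in> W A"
  then have "distinct (map abs w)" "set (map abs w) = A" unfolding W_def by auto
  then have "card A = length (map abs w)" using distinct_card by metis
  then show ?thesis by simp
qed

lemma W_subset: "finite A \<Longrightarrow> W A \<subseteq> {xs. set xs \<subseteq> SA A \<and> length xs = card A}"
proof
  fix w assume w: "w \<in> W A"
  have "set w \<subseteq> SA A"
  proof
    fix x assume "x \<in> set w"
    then have "\<bar>x\<bar> \<in> A" using w unfolding W_def by auto
    then show "x \<in> SA A" unfolding SA_def by (metis Un_iff abs_if image_eqI minus_minus)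
  qed
  then show "w \<in> {xs. set xs \<subseteq> SA A \<and> length xs = card A}" using W_length[OF w] by simp
qed

lemma finite_W: "finite A \<Longrightarrow> finite (W A)"
  by (rule finite_subset[OF W_subset]) (auto intro: finite_lists_length_eq simp: SA_def)

lemma W_empty: "W {} = {[]}"
  by (auto simp: W_def)

lemma SA_abs: "A \<subseteq> {0<..} \<Longrightarrow> c \<in> SA A \<Longrightarrow> \<bar>c\<bar> \<in> A \<and> c \<noteq> 0"
  unfolding SA_def by auto

lemma W_decomp:
  assumes "A \<noteq> {}" "A \<subseteq> {0<..}"
  shows "W A = (\<Union>c\<in>SA A. (\<lambda>u. u @ [c]) ` W (A - {\<bar>c\<bar>}))"
proof
  show "W A \<subseteq> (\<Union>c\<in>SA A. (\<lambda>u. u @ [c]) ` W (A - {\<bar>c\<bar>}))"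
  proof
    fix w assume w: "w \<in> W A"
    then have ne: "w \<noteq> []" using assms unfolding W_def by auto
    define c where "c = last w"
    define u where "u = butlast w"
    have wu: "w = u @ [c]" using ne by (simp add: c_def u_def)
    have "\<bar>c\<bar> \<in> A" using w wu by (auto simp: W_def)
    then have c: "c \<in> SA A" unfolding SA_def by (metis Un_iff abs_if image_eqI minus_minus)
    have "u \<in> W (A - {\<bar>c\<bar>})" using w wu unfolding W_def by (auto simp: image_iff)
    then show "w \<in> (\<Union>c\<in>SA A. (\<lambda>u. u @ [c]) ` W (A - {\<bar>c\<bar>}))" using c wu by blast
  qed
next
  show "(\<Union>c\<in>SA A. (\<lambda>u. u @ [c]) ` W (A - {\<bar>c\<bar>})) \<subseteq> W A"
  proof (rule UN_least, rule image_subsetI)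
    fix c u assume c: "c \<in> SA A" and u: "u \<in> W (A - {\<bar>c\<bar>})"
    have "\<bar>c\<bar> \<in> A" using SA_abs[OF assms(2) c] by simp
    moreover have "distinct (map abs u)" "set (map abs u) = A - {\<bar>c\<bar>}" using u unfolding W_def by auto
    ultimately show "u @ [c] \<in> W A" unfolding W_def by auto
  qed
qed

lemma sum_W_decomp:
  assumes "finite A" "A \<noteq> {}" "A \<subseteq> {0<..}"
  shows "sum f (W A) = (\<Sum>c\<in>SA A. \<Sum>u\<in>W (A - {\<bar>c\<bar>}). f (u @ [c]))"
proof -
  have "sum f (W A) = (\<Sum>c\<in>SA A. sum f ((\<lambda>u. u @ [c]) ` W (A - {\<bar>c\<bar>})))"
    unfolding W_decomp[OF assms(2,3)]
  proof (rule sum.UNION_disjoint)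
    show "finite (SA A)" using assms(1) by (simp add: SA_def)
    show "\<forall>i\<in>SA A. finite ((\<lambda>u. u @ [i]) ` W (A - {\<bar>i\<bar>}))" using assms(1) by (simp add: finite_W)
    show "\<forall>i\<in>SA A. \<forall>j\<in>SA A. i \<noteq> j \<longrightarrow> (\<lambda>u. u @ [i]) ` W (A - {\<bar>i\<bar>}) \<inter> (\<lambda>u. u @ [j]) ` W (A - {\<bar>j\<bar>}) = {}"
      by (auto simp del: append1_eq_conv)
  qed
  also have "\<dots> = (\<Sum>c\<in>SA A. \<Sum>u\<in>W (A - {\<bar>c\<bar>}). f (u @ [c]))"
    by (rule sum.cong[OF refl], subst sum.reindex) (simp_all add: inj_on_def)
  finally show ?thesis .
qed


definition rk :: "int set \<Rightarrow> int \<Rightarrow> nat" where "rk A x = card {y\<in>A. y \<le> x}"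
definition lB :: "int set \<Rightarrow> int list \<Rightarrow> nat" where
  "lB A w = inv w + sum_list (map (\<lambda>a. if a < 0 then rk A (-a) else 0) w)"
definition LL :: "int set \<Rightarrow> int \<Rightarrow> nat" where
  "LL A c = (if 0 < c then card {x\<in>A. c < x} else card A - 1 + rk A (-c))"

lemma sum_list_of_bool: "sum_list (map (\<lambda>a. of_bool (P a) :: nat) xs) = length (filter P xs)"
  by (induction xs) auto

lemma sum_list_cong: "(\<And>a. a \<in> set xs \<Longrightarrow> f a = g a) \<Longrightarrow> sum_list (map f xs) = sum_list (map g xs)"
  by (metis map_cong)

lemma rk_remove:
  assumes "finite A" "x \<in> A" "x \<noteq> b"
  shows "rk A x = rk (A - {b}) x + of_bool (b \<in> A \<and> b < x)"
proof (cases "b \<in> A \<and> b < x")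
  case True
  then have "{y\<in>A. y \<le> x} = insert b {y\<in>A - {b}. y \<le> x}" by auto
  then show ?thesis using True assms by (simp add: rk_def)
next
  case False
  then have "{y\<in>A. y \<le> x} = {y\<in>A - {b}. y \<le> x}" using assms by auto
  then show ?thesis using False by (simp add: rk_def)
qed

lemma lB_snoc:
  assumes A: "finite A" "A \<subseteq> {0<..}" and c: "c \<in> SA A" and w: "w \<in> W (A - {\<bar>c\<bar>})"
  shows "lB A (w @ [c]) = lB (A - {\<bar>c\<bar>}) w + LL A c"
proof -
  let ?A' = "A - {\<bar>c\<bar>}"
  have cA: "\<bar>c\<bar> \<in> A" "c \<noteq> 0" using SA_abs[OF A(2) c] by auto
  have dw: "distinct (map abs w)" and sw: "set (map abs w) = ?A'" using w unfolding W_def by auto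
  have aw: "\<bar>a\<bar> \<in> ?A'" if "a \<in> set w" for a using sw that by auto
  have pos: "a \<noteq> 0" if "a \<in> set w" for a using aw[OF that] A(2) by auto
  define f where "f B a = (if a < 0 then rk B (-a) else 0)" for B a
  have f1: "f A a = f ?A' a + of_bool (a < 0 \<and> \<bar>c\<bar> < \<bar>a\<bar>)" if "a \<in> set w" for a
  proof (cases "a < 0")
    case True
    have "-a \<in> A" "-a \<noteq> \<bar>c\<bar>" using aw[OF that] True by auto
    then show ?thesis using rk_remove[OF A(1), of "-a" "\<bar>c\<bar>"] True cA by (simp add: f_def)
  qed (simp add: f_def)
  have e1: "sum_list (map (f A) w) = sum_list (map (f ?A') w) + length (filter (\<lambda>a. a < 0 \<and> \<bar>c\<bar> < \<bar>a\<bar>) w)"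
    using sum_list_cong[of w "f A" "\<lambda>a. f ?A' a + of_bool (a < 0 \<and> \<bar>c\<bar> < \<bar>a\<bar>)", OF f1]
    by (simp add: sum_list_addf sum_list_of_bool)
  have e2: "length (filter (\<lambda>a. c < a) w) + length (filter (\<lambda>a. a < 0 \<and> \<bar>c\<bar> < \<bar>a\<bar>) w)
      = (if 0 < c then length (filter (\<lambda>x. c < x) (map abs w)) else length w)"
  proof -
    have "length (filter (\<lambda>a. c < a) w) + length (filter (\<lambda>a. a < 0 \<and> \<bar>c\<bar> < \<bar>a\<bar>) w)
       = sum_list (map (\<lambda>a. of_bool (c < a) + of_bool (a < 0 \<and> \<bar>c\<bar> < \<bar>a\<bar>)) w)"
      by (simp add: sum_list_addf sum_list_of_bool)
    also have "\<dots> = sum_list (map (\<lambda>a. if 0 < c then of_bool (c < \<bar>a\<bar>) else 1) w)"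
    proof (rule sum_list_cong)
      fix a assume a: "a \<in> set w"
      have "\<bar>a\<bar> \<noteq> \<bar>c\<bar>" "a \<noteq> 0" using aw[OF a] pos[OF a] by auto
      then show "of_bool (c < a) + of_bool (a < 0 \<and> \<bar>c\<bar> < \<bar>a\<bar>) = (if 0 < c then of_bool (c < \<bar>a\<bar>) else (1::nat))"
        by (cases "0 < c"; cases "a < 0") (auto simp: abs_if)
    qed
    also have "\<dots> = (if 0 < c then length (filter (\<lambda>x. c < x) (map abs w)) else length w)"
    proof (cases "0 < c")
      case True
      then show ?thesis by (simp add: sum_list_of_bool filter_map comp_def)
    next
      case False
      then show ?thesis by (simp add: sum_list_triv)
    qed
    finally show ?thesis .
  qed
  have e3: "0 < c \<Longrightarrow> length (filter (\<lambda>x. c < x) (map abs w)) = card {x\<in>A. c < x}"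
  proof -
    assume "0 < c"
    have "length (filter (\<lambda>x. c < x) (map abs w)) = card ({x. c < x} \<inter> ?A')"
      using distinct_length_filter[OF dw] sw by simp
    also have "{x. c < x} \<inter> ?A' = {x\<in>A. c < x}" using \<open>0 < c\<close> by auto
    finally show ?thesis .
  qed
  have e4: "length w = card A - 1" using W_length[OF w] A(1) cA by simp
  have l1: "lB A (w @ [c]) = inv w + length (filter (\<lambda>a. c < a) w) + sum_list (map (f A) w) + f A c"
    by (simp add: lB_def inv_snoc f_def[abs_def])
  have l2: "lB ?A' w = inv w + sum_list (map (f ?A') w)"
    by (simp add: lB_def f_def[abs_def])
  show ?thesis
  proof (cases "0 < c")
    case True
    then have "f A c = 0" "LL A c = card {x\<in>A. c < x}" by (auto simp: f_def LL_def)
    then show ?thesis using l1 l2 e1 e2 e3 True by simp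
  next
    case False
    then have "f A c = rk A (-c)" "LL A c = card A - 1 + rk A (-c)" using cA by (auto simp: f_def LL_def)
    then show ?thesis using l1 l2 e1 e2 e4 False by simp
  qed
qed


definition key :: "int \<Rightarrow> real" where "key a = (if 0 < a then of_int a else 1 / of_int a)"

lemma prec_key: "a \<noteq> 0 \<Longrightarrow> b \<noteq> 0 \<Longrightarrow> prec a b \<longleftrightarrow> key a < key b"
proof -
  assume a: "a \<noteq> 0" and b: "b \<noteq> 0"
  consider "0 < a" "0 < b" | "0 < a" "b < 0" | "a < 0" "0 < b" | "a < 0" "b < 0" using a b by linarith
  then show ?thesis
  proof cases
    case 1 then show ?thesis by (simp add: prec_def key_def)
  next
    case 2
    have "1 / real_of_int b < 0" "0 < real_of_int a" using 2 by simp_all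
    then have "\<not> real_of_int a < 1 / real_of_int b" by linarith
    then show ?thesis using 2 by (simp add: prec_def key_def)
  next
    case 3
    have "1 / real_of_int a < 0" "0 < real_of_int b" using 3 by simp_all
    then have "1 / real_of_int a < real_of_int b" by linarith
    then show ?thesis using 3 by (simp add: prec_def key_def)
  next
    case 4
    have "1 / real_of_int a < 1 / real_of_int b \<longleftrightarrow> real_of_int b < real_of_int a"
      using 4 by (simp add: divide_simps)
    then show ?thesis using 4 by (simp add: prec_def key_def)
  qed
qed

lemma key_inj: "inj_on key {a. a \<noteq> 0}"
proof (rule inj_onI)
  fix a b assume a: "a \<in> {a. a \<noteq> 0}" and b: "b \<in> {a. a \<noteq> 0}" and e: "key a = key b"
  show "a = b"
  proof (rule ccontr)
    assume "a \<noteq> b"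
    then have "a < b \<or> b < a" by linarith
    moreover have "\<not> prec a b" "\<not> prec b a" using e a b prec_key by auto
    ultimately show False using a b by (auto simp: prec_def)
  qed
qed

lemma sum_card_order:
  fixes T :: "'a::linorder set"
  assumes "finite T"
  shows "(\<Sum>y\<in>T. g (card {z\<in>T. y < z})) = (\<Sum>j<card T. g j)"
  using assms
proof (induction T rule: finite_linorder_min_induct)
  case empty then show ?case by simp
next
  case (insert b T)
  have bT: "b \<notin> T" using insert by auto
  have "(\<Sum>y\<in>insert b T. g (card {z\<in>insert b T. y < z})) = g (card {z\<in>insert b T. b < z}) + (\<Sum>y\<in>T. g (card {z\<in>insert b T. y < z}))"
    using insert bT by simp
  also have "{z\<in>insert b T. b < z} = T" using insert by auto
  also have "(\<Sum>y\<in>T. g (card {z\<in>insert b T. y < z})) = (\<Sum>y\<in>T. g (card {z\<in>T. y < z}))"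
  proof (rule sum.cong[OF refl])
    fix y assume "y \<in> T"
    then have "{z\<in>insert b T. y < z} = {z\<in>T. y < z}" using insert by auto
    then show "g (card {z\<in>insert b T. y < z}) = g (card {z\<in>T. y < z})" by simp
  qed
  finally show ?case using insert bT by (simp add: add.commute)
qed

lemma sum_card_order_split:
  fixes T :: "'a::linorder set"
  assumes "finite T" "k \<notin> T"
  shows "(\<Sum>y\<in>T. f (k < y) (card {z\<in>T. y < z}))
       = (\<Sum>j<card {y\<in>T. k < y}. f True j) + (\<Sum>j<card {y\<in>T. y < k}. f False (card {y\<in>T. k < y} + j))"
proof -
  let ?T1 = "{y\<in>T. k < y}" and ?T2 = "{y\<in>T. y < k}"
  have TT: "T = ?T1 \<union> ?T2" using assms(2) not_less_iff_gr_or_eq by fastforce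
  have fin: "finite ?T1" "finite ?T2" using assms(1) by auto
  have "(\<Sum>y\<in>T. f (k < y) (card {z\<in>T. y < z})) = (\<Sum>y\<in>?T1. f (k < y) (card {z\<in>T. y < z})) + (\<Sum>y\<in>?T2. f (k < y) (card {z\<in>T. y < z}))"
    by (subst TT, rule sum.union_disjoint) (use fin in auto)
  also have "(\<Sum>y\<in>?T1. f (k < y) (card {z\<in>T. y < z})) = (\<Sum>y\<in>?T1. f True (card {z\<in>?T1. y < z}))"
  proof (rule sum.cong[OF refl])
    fix y assume y: "y \<in> ?T1"
    then have "{z\<in>T. y < z} = {z\<in>?T1. y < z}" by auto
    then show "f (k < y) (card {z\<in>T. y < z}) = f True (card {z\<in>?T1. y < z})" using y by simp
  qed
  also have "\<dots> = (\<Sum>j<card ?T1. f True j)" by (rule sum_card_order[OF fin(1)])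
  also have "(\<Sum>y\<in>?T2. f (k < y) (card {z\<in>T. y < z})) = (\<Sum>y\<in>?T2. f False (card ?T1 + card {z\<in>?T2. y < z}))"
  proof (rule sum.cong[OF refl])
    fix y assume y: "y \<in> ?T2"
    then have "{z\<in>T. y < z} = ?T1 \<union> {z\<in>?T2. y < z}" using assms(2) by (auto simp: not_less_iff_gr_or_eq)
    moreover have "card (?T1 \<union> {z\<in>?T2. y < z}) = card ?T1 + card {z\<in>?T2. y < z}"
      by (rule card_Un_disjoint) (use assms(1) in auto)
    moreover have "\<not> k < y" using y by auto
    ultimately show "f (k < y) (card {z\<in>T. y < z}) = f False (card ?T1 + card {z\<in>?T2. y < z})" by simp
  qed
  also have "\<dots> = (\<Sum>j<card ?T2. f False (card ?T1 + j))"
    by (rule sum_card_order[OF fin(2)])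
  finally show ?thesis .
qed

lemma sum_prec_split:
  assumes "finite S" "0 \<notin> S" "c \<noteq> 0" "c \<notin> S"
  shows "(\<Sum>y\<in>S. f (prec c y) (card {z\<in>S. prec y z}))
       = (\<Sum>j<card {y\<in>S. prec c y}. f True j) + (\<Sum>j<card S - card {y\<in>S. prec c y}. f False (card {y\<in>S. prec c y} + j))"
proof -
  have inj: "inj_on key S" using key_inj by (rule inj_on_subset) (use assms(2) in auto)
  have kc: "key c \<notin> key ` S"
  proof
    assume "key c \<in> key ` S"
    then obtain y where y: "y \<in> S" "key c = key y" by auto
    then have "c = y" using key_inj assms(2,3) unfolding inj_on_def by (metis mem_Collect_eq)
    then show False using y assms(4) by simp
  qed
  have c1: "card {z\<in>S. prec y z} = card {v\<in>key ` S. key y < v}" if "y \<in> S" for y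
  proof -
    have "{z\<in>S. prec y z} = {z\<in>S. key y < key z}"
      using prec_key that assms(2) by (metis (mono_tags, lifting))
    moreover have "{v\<in>key ` S. key y < v} = key ` {z\<in>S. key y < key z}" by auto
    ultimately have "{v\<in>key ` S. key y < v} = key ` {z\<in>S. prec y z}" by simp
    then show ?thesis using card_image[OF inj_on_subset[OF inj]] by auto
  qed
  have c2: "card {y\<in>S. prec c y} = card {v\<in>key ` S. key c < v}"
  proof -
    have "{z\<in>S. prec c z} = {z\<in>S. key c < key z}"
      using prec_key assms(2,3) by (metis (mono_tags, lifting))
    moreover have "{v\<in>key ` S. key c < v} = key ` {z\<in>S. key c < key z}" by auto
    ultimately have "{v\<in>key ` S. key c < v} = key ` {z\<in>S. prec c z}" by simp
    then show ?thesis using card_image[OF inj_on_subset[OF inj]] by auto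
  qed
  have c3: "card {v\<in>key ` S. v < key c} = card S - card {y\<in>S. prec c y}"
  proof -
    have "key ` S = {v\<in>key ` S. key c < v} \<union> {v\<in>key ` S. v < key c}" using kc by (auto simp: not_less_iff_gr_or_eq) (metis imageI)
    then have "card (key ` S) = card {v\<in>key ` S. key c < v} + card {v\<in>key ` S. v < key c}"
      by (subst card_Un_disjoint[symmetric]) (use assms(1) in auto)
    then show ?thesis using c2 card_image[OF inj] by simp
  qed
  have "(\<Sum>y\<in>S. f (prec c y) (card {z\<in>S. prec y z})) = (\<Sum>y\<in>S. f (key c < key y) (card {v\<in>key ` S. key y < v}))"
  proof (rule sum.cong[OF refl])
    fix x assume x: "x \<in> S"
    then have "x \<noteq> 0" using assms(2) by auto
    then have "prec c x = (key c < key x)" using prec_key assms(3) by blast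
    then show "f (prec c x) (card {z\<in>S. prec x z}) = f (key c < key x) (card {v\<in>key ` S. key x < v})"
      using c1[OF x] by simp
  qed
  also have "\<dots> = (\<Sum>v\<in>key ` S. f (key c < v) (card {z\<in>key ` S. v < z}))"
    by (subst sum.reindex[OF inj]) simp
  also have "\<dots> = (\<Sum>j<card {y\<in>key ` S. key c < y}. f True j) + (\<Sum>j<card {y\<in>key ` S. y < key c}. f False (card {y\<in>key ` S. key c < y} + j))"
    by (rule sum_card_order_split) (use assms kc in auto)
  finally show ?thesis using c2 c3 by simp
qed


lemma qint_add: "qint (a + b) x = qint a x + x ^ a * qint b x"
  by (induction b) (simp_all add: qint_def algebra_simps power_add)

lemma e_sq: "(e::real) = 1 \<or> e = -1 \<Longrightarrow> e ^ (2 * n) = 1"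
  by (auto simp: power_mult)

lemma key_alg:
  fixes e q :: real
  assumes e: "e = 1 \<or> e = -1" and t: "t \<le> 2 * M"
  shows "e ^ t * (q ^ (2 * M) * qint t (e ^ M * q) + (e ^ M * q) ^ t * qint (2 * M - t) (e ^ M * q))
       = (e ^ (Suc M) * q) ^ t * qint (2 * M) (e ^ M * q)"
proof -
  let ?x = "e ^ M * q"
  have split: "qint (2 * M) ?x = qint (2 * M - t) ?x + ?x ^ (2 * M - t) * qint t ?x"
    using qint_add[of "2 * M - t" t ?x] t by simp
  have h1: "(e ^ (Suc M) * q) ^ t = e ^ t * ?x ^ t"
    by (simp add: power_mult_distrib mult_ac)
  have h2: "e ^ t * ?x ^ t * ?x ^ (2 * M - t) = e ^ t * q ^ (2 * M)"
  proof -
    have "?x ^ t * ?x ^ (2 * M - t) = ?x ^ (2 * M)" using t by (simp add: power_add[symmetric])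
    also have "\<dots> = (e ^ M) ^ (2 * M) * q ^ (2 * M)" by (simp add: power_mult_distrib)
    also have "(e ^ M) ^ (2 * M) = 1" using e_sq[OF e, of "M * M"] by (simp add: power_mult[symmetric] mult_ac)
    finally show ?thesis by (simp add: mult.assoc)
  qed
  have "(e ^ (Suc M) * q) ^ t * qint (2 * M) ?x
      = e ^ t * ?x ^ t * qint (2 * M - t) ?x + (e ^ t * ?x ^ t * ?x ^ (2 * M - t)) * qint t ?x"
    unfolding split h1 by (simp only: distrib_left mult.assoc)
  also have "\<dots> = e ^ t * ?x ^ t * qint (2 * M - t) ?x + e ^ t * q ^ (2 * M) * qint t ?x"
    by (simp only: h2)
  finally show ?thesis by (simp only: distrib_left mult.assoc add.commute)
qed


definition rr :: "int set \<Rightarrow> int \<Rightarrow> nat" where "rr A c = card {y\<in>SA A. prec c y}"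

lemma finite_SA: "finite A \<Longrightarrow> finite (SA A)" by (simp add: SA_def)

lemma zero_SA: "A \<subseteq> {0<..} \<Longrightarrow> 0 \<notin> SA A" by (auto simp: SA_def)

lemma disj_neg: fixes A B :: "int set" assumes "A \<subseteq> {0<..}" "B \<subseteq> A" shows "A \<inter> uminus ` B = {}"
proof -
  { fix x assume x: "x \<in> A" "x \<in> uminus ` B"
    then obtain b where b: "b \<in> B" "x = -b" by auto
    then have "0 < b" "0 < x" using assms x by auto
    then have False using b by linarith }
  then show ?thesis by blast
qed

lemma card_SA: assumes "finite A" "A \<subseteq> {0<..}" shows "card (SA A) = 2 * card A"
proof -
  have "A \<inter> uminus ` A = {}" using disj_neg[OF assms(2)] by simp
  then have "card (SA A) = card A + card (uminus ` A)" unfolding SA_def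
    using assms(1) by (simp add: card_Un_disjoint)
  moreover have "card (uminus ` A) = card A" by (rule card_image) (simp add: inj_on_def)
  ultimately show ?thesis by simp
qed

lemma SA_remove: assumes "A \<subseteq> {0<..}" "c \<in> SA A"
  shows "SA (A - {\<bar>c\<bar>}) = SA A - {c, -c}"
  using assms unfolding SA_def by (auto simp: abs_if)

lemma prec_irrefl: "\<not> prec c c" by (auto simp: prec_def)

lemma rr_remove: assumes "A \<subseteq> {0<..}" "c \<in> SA A" "finite A"
  shows "rr A c = card {y\<in>SA (A - {\<bar>c\<bar>}). prec c y} + of_bool (c < 0)"
proof -
  have cA: "\<bar>c\<bar> \<in> A" "c \<noteq> 0" using SA_abs[OF assms(1,2)] by auto
  have mc: "-c \<in> SA A" using assms(2) unfolding SA_def by (auto simp: image_iff)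
  have eq: "{y\<in>SA A. prec c y} = {y\<in>SA (A - {\<bar>c\<bar>}). prec c y} \<union> (if c < 0 then {-c} else {})"
  proof -
    have "{y\<in>SA A. prec c y} = {y\<in>SA A - {c, -c}. prec c y} \<union> {y\<in>{c, -c}. prec c y}"
      using assms(2) mc by auto
    moreover have "{y\<in>{c, -c}. prec c y} = (if c < 0 then {-c} else {})"
      using cA prec_irrefl by (auto simp: prec_def)
    ultimately show ?thesis using SA_remove[OF assms(1,2)] by simp
  qed
  have fin: "finite {y\<in>SA (A - {\<bar>c\<bar>}). prec c y}" using assms(3) by (simp add: finite_SA)
  show ?thesis unfolding rr_def eq using fin SA_remove[OF assms(1,2)]
    by (cases "c < 0") (auto simp: card_insert_if)
qed

lemma t_pos: assumes "A \<subseteq> {0<..}" "c \<in> SA A" "0 < c"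
  shows "{y\<in>SA (A - {\<bar>c\<bar>}). prec c y} = {x\<in>A. c < x}"
  using assms unfolding SA_def prec_def by auto

lemma rr_neg: assumes "A \<subseteq> {0<..}" "c \<in> SA A" "c < 0" "finite A"
  shows "rr A c + rk A (-c) = 2 * card A"
proof -
  let ?a = "-c"
  have aA: "?a \<in> A" using SA_abs[OF assms(1,2)] assms(3) by auto
  have eq: "{y\<in>SA A. prec c y} = A \<union> uminus ` {x\<in>A. ?a < x}"
    using assms(1,3) unfolding SA_def prec_def by auto
  have "card {y\<in>SA A. prec c y} = card A + card (uminus ` {x\<in>A. ?a < x})"
    unfolding eq by (rule card_Un_disjoint) (use assms(4) disj_neg[OF assms(1), of "{x\<in>A. ?a < x}"] in auto)
  moreover have "card (uminus ` {x\<in>A. ?a < x}) = card {x\<in>A. ?a < x}"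
    by (rule card_image) (simp add: inj_on_def)
  moreover have "card {x\<in>A. ?a < x} + rk A ?a = card A"
  proof -
    have "A = {x\<in>A. ?a < x} \<union> {y\<in>A. y \<le> ?a}" by auto
    then have "card A = card ({x\<in>A. ?a < x} \<union> {y\<in>A. y \<le> ?a})" by simp
    also have "\<dots> = card {x\<in>A. ?a < x} + card {y\<in>A. y \<le> ?a}"
      by (rule card_Un_disjoint) (use assms(4) in auto)
    finally show ?thesis by (simp add: rk_def)
  qed
  ultimately show ?thesis unfolding rr_def by simp
qed

lemma rk_pos: assumes "x \<in> A" "finite A" shows "1 \<le> rk A x"
proof -
  have "x \<in> {y\<in>A. y \<le> x}" using assms by auto
  then have "{y\<in>A. y \<le> x} \<noteq> {}" by auto
  then show ?thesis unfolding rk_def using assms(2) by (simp add: Suc_leI card_gt_0_iff)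
qed


definition PP :: "real \<Rightarrow> real \<Rightarrow> nat \<Rightarrow> real" where
  "PP e q k = (\<Prod>i=1..k. qint (2*i) (e^i*q))"
definition G :: "real \<Rightarrow> real \<Rightarrow> int set \<Rightarrow> int \<Rightarrow> real" where
  "G e q A c = (\<Sum>w\<in>W (A - {\<bar>c\<bar>}). e ^ lB A (w @ [c]) * q ^ fmaj (w @ [c]))"

lemma inv_Nil: "inv [] = 0" by (simp add: inv_def)
lemma fmaj_Nil: "fmaj [] = 0" by (simp add: fmaj_def maj_prec_def neg_def)
lemma inv_single: "inv [c] = 0" using inv_snoc[of "[]" c] by (simp add: inv_Nil)
lemma fmaj_single: "fmaj [c] = (if c < 0 then 1 else 0)" using fmaj_snoc[of "[]" c] by (simp add: fmaj_Nil)

lemma G_base: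
  assumes "A = {a}" "0 < a" "c \<in> SA A"
  shows "G e q A c = (e * q) ^ rr A c"
proof -
  have c: "c = a \<or> c = -a" using assms unfolding SA_def by auto
  have Ae: "A - {\<bar>c\<bar>} = {}" using c assms by auto
  have "G e q A c = e ^ lB A [c] * q ^ fmaj [c]"
    unfolding G_def Ae W_empty by simp
  moreover have "lB A [c] = (if c < 0 then 1 else 0)"
  proof -
    have "{y\<in>A. y \<le> a} = {a}" using assms by auto
    then show ?thesis using c assms by (auto simp: lB_def inv_single rk_def)
  qed
  moreover have "rr A c = (if c < 0 then 1 else 0)"
  proof -
    have "SA A = {a, -a}" using assms by (auto simp: SA_def)
    then have "{y\<in>SA A. prec c y} = (if c < 0 then {a} else {})"
      using c assms by (auto simp: prec_def)
    then show ?thesis by (simp add: rr_def)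
  qed
  ultimately show ?thesis by (simp add: fmaj_single)
qed


lemma G_step:
  fixes e q :: real
  assumes e: "e = 1 \<or> e = -1" and A: "finite A" "A \<subseteq> {0<..}" "card A = Suc (Suc k)"
    and c: "c \<in> SA A"
    and IH: "\<And>c'. c' \<in> SA (A - {\<bar>c\<bar>}) \<Longrightarrow> G e q (A - {\<bar>c\<bar>}) c' = (e ^ Suc k * q) ^ rr (A - {\<bar>c\<bar>}) c' * PP e q k"
  shows "G e q A c = (e ^ Suc (Suc k) * q) ^ rr A c * PP e q (Suc k)"
proof -
  define A' where "A' = A - {\<bar>c\<bar>}"
  define M where "M = Suc k"
  define x where "x = e ^ M * q"
  define t where "t = card {y\<in>SA A'. prec c y}"
  have cA: "\<bar>c\<bar> \<in> A" "c \<noteq> 0" using SA_abs[OF A(2) c] by auto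
  have A'0: "finite A'" "A' \<subseteq> {0<..}" "card A' = M"
    using A cA by (auto simp: A'_def M_def)
  then have A': "finite A'" "A' \<subseteq> {0<..}" "card A' = M" "A' \<noteq> {}"
    by (auto simp: M_def)
  have cS: "c \<notin> SA A'" "0 \<notin> SA A'" using SA_remove[OF A(2) c] zero_SA[OF A'(2)] by (auto simp: A'_def)
  have cardS: "card (SA A') = 2 * M" using card_SA[OF A'(1,2)] A'(3) by simp
  have tle: "t \<le> 2 * M" unfolding t_def cardS[symmetric]
    by (rule card_mono) (use A'(1) finite_SA in auto)
  define C where "C c' = e ^ LL A c * q ^ (if c < 0 then 1 else 0) * (if prec c c' then q ^ (2 * M) else 1)" for c'
  have "G e q A c = (\<Sum>w\<in>W A'. e ^ lB A (w @ [c]) * q ^ fmaj (w @ [c]))"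
    by (simp add: G_def A'_def)
  also have "\<dots> = (\<Sum>c'\<in>SA A'. \<Sum>u\<in>W (A' - {\<bar>c'\<bar>}). e ^ lB A (u @ [c'] @ [c]) * q ^ fmaj (u @ [c'] @ [c]))"
    by (subst sum_W_decomp[OF A'(1) A'(4) A'(2)]) simp
  also have "\<dots> = (\<Sum>c'\<in>SA A'. C c' * G e q A' c')"
  proof (rule sum.cong[OF refl])
    fix c' assume c': "c' \<in> SA A'"
    have "(\<Sum>u\<in>W (A' - {\<bar>c'\<bar>}). e ^ lB A (u @ [c'] @ [c]) * q ^ fmaj (u @ [c'] @ [c]))
        = (\<Sum>u\<in>W (A' - {\<bar>c'\<bar>}). C c' * (e ^ lB A' (u @ [c']) * q ^ fmaj (u @ [c'])))"
    proof (rule sum.cong[OF refl])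
      fix u assume u: "u \<in> W (A' - {\<bar>c'\<bar>})"
      have uw: "u @ [c'] \<in> W A'"
        using W_decomp[OF A'(4) A'(2)] c' u by blast
      have len: "length (u @ [c']) = M" using W_length[OF uw] A'(3) by simp
      have l: "lB A ((u @ [c']) @ [c]) = lB A' (u @ [c']) + LL A c"
        using lB_snoc[OF A(1,2) c, of "u @ [c']"] uw by (simp add: A'_def)
      have f: "fmaj ((u @ [c']) @ [c]) = fmaj (u @ [c']) + (if prec c c' then 2 * M else 0) + (if c < 0 then 1 else 0)"
        using fmaj_snoc[of "u @ [c']" c] len by simp
      show "e ^ lB A (u @ [c'] @ [c]) * q ^ fmaj (u @ [c'] @ [c]) = C c' * (e ^ lB A' (u @ [c']) * q ^ fmaj (u @ [c']))"
        using l f unfolding C_def by (cases "prec c c'") (simp_all add: power_add mult_ac)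
    qed
    also have "\<dots> = C c' * G e q A' c'"
      by (simp add: G_def sum_distrib_left)
    finally show "(\<Sum>u\<in>W (A' - {\<bar>c'\<bar>}). e ^ lB A (u @ [c'] @ [c]) * q ^ fmaj (u @ [c'] @ [c])) = C c' * G e q A' c'" .
  qed
  also have "\<dots> = (\<Sum>c'\<in>SA A'. C c' * (x ^ rr A' c' * PP e q k))"
    using IH by (simp add: A'_def x_def M_def)
  also have "\<dots> = e ^ LL A c * q ^ (if c < 0 then 1 else 0) * PP e q k *
      (\<Sum>c'\<in>SA A'. (\<lambda>b j. (if b then q ^ (2 * M) else 1) * x ^ j) (prec c c') (card {z\<in>SA A'. prec c' z}))"
    by (simp add: sum_distrib_left C_def rr_def mult_ac)
  also have "(\<Sum>c'\<in>SA A'. (\<lambda>b j. (if b then q ^ (2 * M) else 1) * x ^ j) (prec c c') (card {z\<in>SA A'. prec c' z}))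
      = (\<Sum>j<t. q ^ (2 * M) * x ^ j) + (\<Sum>j<2 * M - t. x ^ (t + j))"
    using sum_prec_split[OF finite_SA[OF A'(1)] cS(2) cA(2) cS(1), of "\<lambda>b j. (if b then q ^ (2 * M) else 1) * x ^ j"]
    by (simp add: t_def cardS)
  also have "\<dots> = q ^ (2 * M) * qint t x + x ^ t * qint (2 * M - t) x"
    by (simp add: qint_def sum_distrib_left power_add)
  finally have G1: "G e q A c = e ^ LL A c * q ^ (if c < 0 then 1 else 0) * PP e q k * (q ^ (2 * M) * qint t x + x ^ t * qint (2 * M - t) x)" .
  have alg: "e ^ t * (q ^ (2 * M) * qint t x + x ^ t * qint (2 * M - t) x) = (e ^ Suc M * q) ^ t * qint (2 * M) x"
    unfolding x_def by (rule key_alg[OF e tle])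
  have ett: "e ^ t * e ^ t = 1" using e_sq[OF e, of t] by (simp add: power_add[symmetric] mult_2)
  have G2: "G e q A c = e ^ LL A c * e ^ t * q ^ (if c < 0 then 1 else 0) * PP e q k * ((e ^ Suc M * q) ^ t * qint (2 * M) x)"
  proof -
    have "q ^ (2 * M) * qint t x + x ^ t * qint (2 * M - t) x = e ^ t * (e ^ t * (q ^ (2 * M) * qint t x + x ^ t * qint (2 * M - t) x))"
      using ett by (simp add: mult.assoc[symmetric])
    then show ?thesis unfolding G1 alg by (simp add: mult_ac)
  qed
  have PPS: "PP e q (Suc k) = PP e q k * qint (2 * M) x"
    by (simp add: PP_def x_def M_def)
  have rrA: "rr A c = t + (if c < 0 then 1 else 0)"
    using rr_remove[OF A(2) c A(1)] by (simp add: t_def A'_def)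
  show ?thesis
  proof (cases "0 < c")
    case True
    have "LL A c = t" using t_pos[OF A(2) c True] True by (simp add: LL_def t_def A'_def)
    then show ?thesis using G2 rrA True ett PPS by (simp add: M_def mult_ac)
  next
    case False
    then have neg: "c < 0" using cA by simp
    have rk1: "rr A c + rk A (-c) = 2 * card A" by (rule rr_neg[OF A(2) c neg A(1)])
    have "LL A c = card A - 1 + rk A (-c)" using neg by (simp add: LL_def)
    then have "LL A c + t = 3 * k + 4" using rk1 rrA neg A(3) by simp
    moreover have "Suc (Suc k) + 2 * Suc k = 3 * k + 4" by simp
    ultimately have "e ^ LL A c * e ^ t = e ^ (Suc (Suc k) + 2 * Suc k)" by (simp only: power_add[symmetric])
    also have "\<dots> = e ^ Suc (Suc k)" unfolding power_add using e_sq[OF e, of "Suc k"] by simp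
    finally have "e ^ LL A c * e ^ t = e ^ Suc (Suc k)" .
    then show ?thesis using G2 rrA neg PPS by (simp add: M_def mult_ac)
  qed
qed


lemma G_formula:
  fixes e q :: real
  assumes e: "e = 1 \<or> e = -1"
  shows "finite A \<Longrightarrow> A \<subseteq> {0<..} \<Longrightarrow> card A = Suc k \<Longrightarrow> c \<in> SA A \<Longrightarrow>
    G e q A c = (e ^ Suc k * q) ^ rr A c * PP e q k"
proof (induction k arbitrary: A c)
  case 0
  then obtain a where a: "A = {a}" by (auto simp: card_Suc_eq)
  then have "0 < a" using 0 by auto
  then show ?case using G_base[OF a _ 0(4)] by (simp add: PP_def)
next
  case (Suc k)
  have cA: "\<bar>c\<bar> \<in> A" using SA_abs[OF Suc.prems(2,4)] by auto
  show ?case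
  proof (rule G_step[OF e Suc.prems(1-4)])
    fix c' assume c': "c' \<in> SA (A - {\<bar>c\<bar>})"
    show "G e q (A - {\<bar>c\<bar>}) c' = (e ^ Suc k * q) ^ rr (A - {\<bar>c\<bar>}) c' * PP e q k"
      by (rule Suc.IH) (use Suc.prems cA c' in auto)
  qed
qed

lemma sum_neg_rk:
  assumes "\<forall>a\<in>set w. a < 0 \<longrightarrow> rk N (-a) = nat (-a)"
  shows "int (sum_list (map (\<lambda>a. if a < 0 then rk N (-a) else 0) w)) = - sum_list (filter (\<lambda>a. a < 0) w)"
  using assms by (induction w) auto

lemma rk_N: assumes "x \<in> {1..int n}" shows "rk {1..int n} x = nat x"
proof -
  have "{y\<in>{1..int n}. y \<le> x} = {1..x}" using assms by auto
  then show ?thesis by (simp add: rk_def)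
qed

lemma lengthB_lB:
  assumes "w \<in> W {1..int n}"
  shows "lengthB w = lB {1..int n} w"
proof -
  have "\<forall>a\<in>set w. a < 0 \<longrightarrow> rk {1..int n} (-a) = nat (-a)"
  proof (intro ballI impI)
    fix a assume "a \<in> set w" "a < 0"
    then have "-a \<in> {1..int n}" using assms unfolding W_def by force
    then show "rk {1..int n} (-a) = nat (-a)" by (rule rk_N)
  qed
  from sum_neg_rk[OF this] show ?thesis
    unfolding lengthB_def lB_def by linarith
qed

lemma Delta_W: "Delta_lt n = {w\<in>W {1..int n}. w \<noteq> [] \<and> 0 < last w \<and> last w < int n}"
proof -
  have "w \<in> signed_perms n \<longleftrightarrow> w \<in> W {1..int n}" for w
    using W_length[of w "{1..int n}"] unfolding signed_perms_def W_def by auto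
  moreover have "w \<noteq> []" if "w \<in> signed_perms n" "0 < last w" "last w < int n" for w
  proof
    assume "w = []"
    then have "n = 0" using that(1) by (simp add: signed_perms_def)
    then show False using that(2,3) by simp
  qed
  ultimately show ?thesis unfolding Delta_lt_def by auto
qed

lemma rr_N: assumes "0 < c" "c < int n"
  shows "rr {1..int n} c = nat (int n - c)"
proof -
  have "{y\<in>SA {1..int n}. prec c y} = {c+1..int n}"
    using assms unfolding SA_def prec_def by auto
  then show ?thesis unfolding rr_def by simp
qed

lemma geo_sum: "(\<Sum>c\<in>{1..int m}. (y::real) ^ nat (int m + 1 - c)) = y * qint m y"
proof (induction m)
  case 0 then show ?case by (simp add: qint_def)
next
  case (Suc m)
  have "{1..int (Suc m)} = insert (int m + 1) {1..int m}" by auto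
  then have "(\<Sum>c\<in>{1..int (Suc m)}. y ^ nat (int (Suc m) + 1 - c)) = y + (\<Sum>c\<in>{1..int m}. y ^ nat (int (Suc m) + 1 - c))"
    by simp
  also have "(\<Sum>c\<in>{1..int m}. y ^ nat (int (Suc m) + 1 - c)) = y * (\<Sum>c\<in>{1..int m}. y ^ nat (int m + 1 - c))"
  proof (simp only: sum_distrib_left, rule sum.cong[OF refl])
    fix c assume "c \<in> {1..int m}"
    then have "nat (int (Suc m) + 1 - c) = Suc (nat (int m + 1 - c))" by auto
    then show "y ^ nat (int (Suc m) + 1 - c) = y * y ^ nat (int m + 1 - c)" by simp
  qed
  also have "\<dots> = y * (y * qint m y)" using Suc.IH by simp
  also have "qint (Suc m) y = 1 + y * qint m y"
    unfolding qint_def sum.lessThan_Suc_shift by (simp add: sum_distrib_left)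
  ultimately show ?case by (simp add: algebra_simps)
qed


lemma part1:
  fixes e q :: real and n :: nat
  assumes e: "e = 1 \<or> e = -1" and n: "n \<ge> 2"
  shows "(\<Sum>\<gamma>\<in>Delta_lt n. e ^ lengthB \<gamma> * q ^ fmaj \<gamma>) = e ^ n * q * PP e q (n - 1) * qint (n - 1) (e ^ n * q)"
proof -
  define N where "N = {1..int n}"
  define f where "f w = e ^ lengthB w * q ^ fmaj w" for w
  have N: "finite N" "N \<subseteq> {0<..}" "N \<noteq> {}" "card N = Suc (n - 1)" using n by (auto simp: N_def)
  have "(\<Sum>\<gamma>\<in>Delta_lt n. f \<gamma>) = (\<Sum>w\<in>W N. if w \<noteq> [] \<and> 0 < last w \<and> last w < int n then f w else 0)"
    unfolding Delta_W N_def by (rule sum.inter_filter) (simp add: finite_W)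
  also have "\<dots> = (\<Sum>c\<in>SA N. \<Sum>u\<in>W (N - {\<bar>c\<bar>}). if 0 < c \<and> c < int n then f (u @ [c]) else 0)"
    by (subst sum_W_decomp[OF N(1,3,2)]) simp
  also have "\<dots> = (\<Sum>c\<in>SA N. if 0 < c \<and> c < int n then G e q N c else 0)"
  proof (rule sum.cong[OF refl])
    fix c assume c: "c \<in> SA N"
    have "(\<Sum>u\<in>W (N - {\<bar>c\<bar>}). f (u @ [c])) = G e q N c"
      unfolding G_def
    proof (rule sum.cong[OF refl])
      fix u assume "u \<in> W (N - {\<bar>c\<bar>})"
      then have "u @ [c] \<in> W N" using W_decomp[OF N(3,2)] c by blast
      then show "f (u @ [c]) = e ^ lB N (u @ [c]) * q ^ fmaj (u @ [c])"
        using lengthB_lB[of "u @ [c]" n] by (simp add: f_def N_def)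
    qed
    then show "(\<Sum>u\<in>W (N - {\<bar>c\<bar>}). if 0 < c \<and> c < int n then f (u @ [c]) else 0) = (if 0 < c \<and> c < int n then G e q N c else 0)"
    proof -
      have "\<And>(X::int list set) g P. (\<Sum>u\<in>X. if P then g u else (0::real)) = (if P then (\<Sum>u\<in>X. g u) else 0)"
        by simp
      then show ?thesis using \<open>(\<Sum>u\<in>W (N - {\<bar>c\<bar>}). f (u @ [c])) = G e q N c\<close> by metis
    qed
  qed
  also have "\<dots> = (\<Sum>c\<in>{c\<in>SA N. 0 < c \<and> c < int n}. G e q N c)"
    by (rule sum.inter_filter[symmetric]) (simp add: finite_SA N(1))
  also have "{c\<in>SA N. 0 < c \<and> c < int n} = {1..int (n - 1)}"
    using n by (auto simp: SA_def N_def)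
  also have "(\<Sum>c\<in>{1..int (n - 1)}. G e q N c) = (\<Sum>c\<in>{1..int (n - 1)}. (e ^ n * q) ^ nat (int (n - 1) + 1 - c) * PP e q (n - 1))"
  proof (rule sum.cong[OF refl])
    fix c assume c: "c \<in> {1..int (n - 1)}"
    then have cS: "c \<in> SA N" using n by (auto simp: SA_def N_def)
    have "rr N c = nat (int (n - 1) + 1 - c)" using rr_N[of c n] c n by (simp add: N_def of_nat_diff)
    moreover have "e ^ Suc (n - 1) = e ^ n" using n by simp
    ultimately show "G e q N c = (e ^ n * q) ^ nat (int (n - 1) + 1 - c) * PP e q (n - 1)"
      using G_formula[OF e N(1,2,4) cS] by simp
  qed
  also have "\<dots> = (e ^ n * q) * qint (n - 1) (e ^ n * q) * PP e q (n - 1)"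
    by (simp add: sum_distrib_right[symmetric] geo_sum)
  finally show ?thesis unfolding f_def by (simp add: mult_ac)
qed


lemma qint_geom: "(1 - x) * qint m x = 1 - x ^ m"
proof (induction m)
  case 0 then show ?case by (simp add: qint_def)
next
  case (Suc m)
  have "(1 - x) * qint (Suc m) x = (1 - x) * qint m x + (1 - x) * x ^ m"
    by (simp add: qint_def distrib_left)
  also have "\<dots> = 1 - x ^ m + (x ^ m - x ^ Suc m)"
    unfolding Suc.IH by (simp add: algebra_simps)
  finally show ?case by simp
qed

lemma qint_neg:
  fixes q :: real
  assumes "q \<noteq> -1" "even m"
  shows "qint m (-q) = (1 - q) / (1 + q) * qint m q"
proof -
  have "(1 + q) * qint m (-q) = 1 - q ^ m" using qint_geom[of "-q" m] assms(2) by simp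
  also have "\<dots> = (1 - q) * qint m q" using qint_geom[of q m] by simp
  finally have "(1 + q) * qint m (-q) = (1 - q) * qint m q" .
  moreover have "1 + q \<noteq> 0" using assms(1) by (metis add.commute add_eq_0_iff)
  ultimately show ?thesis by (simp add: field_simps)
qed

lemma factor:
  fixes e q :: real
  assumes e: "e = 1 \<or> e = -1" and eq: "e * q \<noteq> 1" and m: "even m \<or> even i"
  shows "qint m (e ^ i * q) = ((1 - q) / (1 - e * q)) ^ (if odd i then 1 else 0) * qint m q"
proof (cases "e = 1")
  case True
  then have "(1 - q) / (1 - e * q) = 1" using eq by simp
  then show ?thesis using True by simp
next
  case False
  then have em: "e = -1" using e by simp
  show ?thesis
  proof (cases "even i")
    case True then show ?thesis using em by simp
  next
    case False
    then have "e ^ i = -1" using em by simp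
    moreover have "q \<noteq> -1" using eq em by auto
    ultimately show ?thesis using qint_neg[of q m] m False em by simp
  qed
qed

lemma prod_factor:
  fixes e q :: real
  assumes e: "e = 1 \<or> e = -1" and eq: "e * q \<noteq> 1"
  shows "(\<Prod>i=1..m. qint (2*i) (e ^ i * q)) = ((1 - q) / (1 - e * q)) ^ ((m + 1) div 2) * (\<Prod>i=1..m. qint (2*i) q)"
proof (induction m)
  case 0 then show ?case by simp
next
  case (Suc m)
  let ?r = "(1 - q) / (1 - e * q)"
  have "(\<Prod>i=1..Suc m. qint (2*i) (e ^ i * q)) = qint (2 * Suc m) (e ^ Suc m * q) * (\<Prod>i=1..m. qint (2*i) (e ^ i * q))"
    by (simp add: atLeastAtMostSuc_conv)
  also have "\<dots> = ?r ^ (if odd (Suc m) then 1 else 0) * qint (2 * Suc m) q * (?r ^ ((m + 1) div 2) * (\<Prod>i=1..m. qint (2*i) q))"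
    using factor[OF e eq, of "2 * Suc m" "Suc m"] Suc.IH by simp
  also have "\<dots> = ?r ^ ((if odd (Suc m) then 1 else 0) + (m + 1) div 2) * (qint (2 * Suc m) q * (\<Prod>i=1..m. qint (2*i) q))"
    by (simp add: power_add mult_ac)
  also have "(if odd (Suc m) then 1 else 0) + (m + 1) div 2 = (Suc m + 1) div 2" by presburger
  also have "qint (2 * Suc m) q * (\<Prod>i=1..m. qint (2*i) q) = (\<Prod>i=1..Suc m. qint (2*i) q)"
    by (simp add: atLeastAtMostSuc_conv)
  finally show ?case .
qed

lemma ceil_half: "nat \<lceil>real n / 2\<rceil> = (n + 1) div 2"
proof (cases "even n")
  case True
  then obtain k where "n = 2 * k" by auto
  then show ?thesis by simp
next
  case False
  then obtain k where k: "n = 2 * k + 1" using oddE by blast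
  have "\<lceil>real n / 2\<rceil> = int k + 1"
    unfolding k by (rule ceiling_unique) auto
  then show ?thesis using k by simp
qed

lemma part2:
  fixes e q :: real and n :: nat
  assumes e: "e = 1 \<or> e = -1" and n: "n \<ge> 2" and eq: "e * q \<noteq> 1"
  shows "e ^ n * q * (\<Prod>i=1..n-1. qint (2*i) (e ^ i * q)) * qint (n - 1) (e ^ n * q)
           = e ^ n * q * ((1 - q) / (1 - e * q)) ^ nat \<lceil>real n / 2\<rceil>
             * (\<Prod>i=1..n-1. qint (2*i) q) * qint (n - 1) q"
proof -
  let ?r = "(1 - q) / (1 - e * q)"
  have p: "(\<Prod>i=1..n-1. qint (2*i) (e ^ i * q)) = ?r ^ (n div 2) * (\<Prod>i=1..n-1. qint (2*i) q)"
    using prod_factor[OF e eq, of "n - 1"] n by simp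
  have l: "qint (n - 1) (e ^ n * q) = ?r ^ (if odd n then 1 else 0) * qint (n - 1) q"
    by (rule factor[OF e eq]) (use n in auto)
  have c: "nat \<lceil>real n / 2\<rceil> = n div 2 + (if odd n then 1 else 0)"
    unfolding ceil_half by presburger
  show ?thesis unfolding p l c by (simp add: power_add mult_ac)
qed

theorem proposition5p2:
  fixes \<epsilon> q :: real and n :: nat
  assumes "\<epsilon> = 1 \<or> \<epsilon> = -1" and "n \<ge> 2"
  shows "(\<Sum>\<gamma>\<in>Delta_lt n. \<epsilon> ^ lengthB \<gamma> * q ^ fmaj \<gamma>)
           = \<epsilon> ^ n * q * (\<Prod>i=1..n-1. qint (2*i) (\<epsilon> ^ i * q)) * qint (n - 1) (\<epsilon> ^ n * q)
       \<and> (\<epsilon> * q \<noteq> 1 \<longrightarrow>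
         \<epsilon> ^ n * q * (\<Prod>i=1..n-1. qint (2*i) (\<epsilon> ^ i * q)) * qint (n - 1) (\<epsilon> ^ n * q)
           = \<epsilon> ^ n * q * ((1 - q) / (1 - \<epsilon> * q)) ^ nat \<lceil>real n / 2\<rceil>
             * (\<Prod>i=1..n-1. qint (2*i) q) * qint (n - 1) q)"
  using part1[OF assms] part2[OF assms] by (simp add: PP_def)

end
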